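(* CTL*$_{cd}$ is invariant under cycle-bisimulation: if $\mathcal K_1=(AP,W_1,R_1,L_1,w_{I,1})$ and $\mathcal K_2=(AP,W_2,R_2,L_2,w_{I,2})$ are Kripke structures and $B\subseteq W_1\times W_2$ is a cycle-bisimulation relation, then for every CTL*$_{cd}$ state formula $\varphi$ and every $(w_1,w_2)\in B$ we have $\mathcal K_1,w_1\models\varphi$ iff $\mathcal K_2,w_2\models\varphi$; in particular $\mathcal K_1\models\varphi$ iff $\mathcal K_2\models\varphi$.
   Context: A Kripke structure over a finite set $AP$ of atomic propositions is a tuple $\mathcal K=(AP,W,R,L,w_I)$ where $W$ is a countable non-empty set of worlds, $w_I\in W$ is the initial world, $R\subseteq W\times W$ is a left-total transition relation (every world has at least one $R$-successor), and $L:W\to 2^{AP}$ is a labelling function. A path is an infinite sequence $\pi=\pi_0\pi_1\cdots$ of worlds with $(\pi_i,\pi_{i+1})\in R$ for all $i\in\mathbb N$; $\mathrm{Pth}(w)$ is the set of paths with $\pi_0=w$. A path $\pi$ is a cycle if for every $i\in\mathbb N$ there is $j>i$ with $\pi_j=\pi_0$ (i.e. $\pi_0$ occurs infinitely often in $\pi$); $\mathrm{Cyc}(w)$ is the set of cycles with $\pi_0=w$. Syntax of CTL*$_{cd}$: state formulas $\varphi::=p\mid\neg\varphi\mid\varphi\wedge\varphi\mid\varphi\vee\varphi\mid \mathsf E\psi\mid\mathsf A\psi\mid\mathsf E^{c}\psi\mid\mathsf A^{c}\psi$ with $p\in AP$; path formulas $\psi::=\varphi\mid\neg\psi\mid\psi\wedge\psi\mid\psi\vee\psi\mid\mathsf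 X\psi\mid\psi\,\mathsf U\,\psi$. Semantics: $\mathcal K,w\models p$ iff $p\in L(w)$; Boolean connectives as usual; $\mathcal K,w\models\mathsf E\psi$ iff some $\pi\in\mathrm{Pth}(w)$ has $\mathcal K,\pi,0\models\psi$; $\mathcal K,w\models\mathsf A\psi$ iff every $\pi\in\mathrm{Pth}(w)$ has $\mathcal K,\pi,0\models\psi$; $\mathcal K,w\models\mathsf E^{c}\psi$ iff some $\pi\in\mathrm{Cyc}(w)$ has $\mathcal K,\pi,0\models\psi$; $\mathcal K,w\models\mathsf A^{c}\psi$ iff every $\pi\in\mathrm{Cyc}(w)$ has $\mathcal K,\pi,0\models\psi$. For paths: $\mathcal K,\pi,i\models\varphi$ (state formula) iff $\mathcal K,\pi_i\models\varphi$; Boolean connectives as usual; $\mathcal K,\pi,i\models\mathsf X\psi$ iff $\mathcal K,\pi,i+1\models\psi$; $\mathcal K,\pi,i\models\psi_1\mathsf U\psi_2$ iff there is $k\ge0$ with $\mathcal K,\pi,i+k\models\psi_2$ and $\mathcal K,\pi,i+j\models\psi_1$ for all $0\le j<k$. $\mathcal K\models\varphi$ iff $\mathcal K,w_I\models\varphi$. A relation $B\subseteq W_1\times W_2$ is a cycle-bisimulation relation between $\mathcal K_1$ and $\mathcal K_2$ if $(w_{I,1},w_{I,2})\in B$ and for all $(w_1,w_2)\in B$: (a) $L_1(w_1)=L_2(w_2)$; (b) for every $v_1$ with $(w_1,v_1)\in R_1$ there is $v_2$ with $(w_2,v_2)\in R_2$ and $(v_1,v_2)\in B$; (c) for every $v_2$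 with $(w_2,v_2)\in R_2$ there is $v_1$ with $(w_1,v_1)\in R_1$ and $(v_1,v_2)\in B$; (d) for every cycle $\pi_1$ of $\mathcal K_1$ with first world $w_1$ there is a cycle $\pi_2$ of $\mathcal K_2$ with first world $w_2$ such that $((\pi_1)_i,(\pi_2)_i)\in B$ for all $i\in\mathbb N$; (e) for every cycle $\pi_2$ of $\mathcal K_2$ with first world $w_2$ there is a cycle $\pi_1$ of $\mathcal K_1$ with first world $w_1$ such that $((\pi_1)_i,(\pi_2)_i)\in B$ for all $i\in\mathbb N$. *)

theory Defs
  imports Main "HOL-Library.Countable_Set"
begin

record ('ap, 'w) kripke =
  kAP :: "'ap set"
  kW  :: "'w set"
  kR  :: "('w \<times> 'w) set"
  kL  :: "'w \<Rightarrow> 'ap set"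
  kI  :: "'w"

definition kripke_wf :: "('ap, 'w) kripke \<Rightarrow> bool" where
  "kripke_wf K \<longleftrightarrow>
     finite (kAP K) \<and> countable (kW K) \<and> kW K \<noteq> {} \<and> kI K \<in> kW K \<and>
     kR K \<subseteq> kW K \<times> kW K \<and>
     (\<forall>w\<in>kW K. \<exists>v. (w, v) \<in> kR K) \<and>
     (\<forall>w\<in>kW K. kL K w \<subseteq> kAP K)"

definition is_path :: "('ap, 'w) kripke \<Rightarrow> (nat \<Rightarrow> 'w) \<Rightarrow> bool" where
  "is_path K \<pi> \<longleftrightarrow> (\<forall>i. (\<pi> i, \<pi> (Suc i)) \<in> kR K)"

definition Pth :: "('ap, 'w) kripke \<Rightarrow> 'w \<Rightarrow> (nat \<Rightarrow> 'w) set" where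
  "Pth K w = {\<pi>. is_path K \<pi> \<and> \<pi> 0 = w}"

definition is_cycle :: "('ap, 'w) kripke \<Rightarrow> (nat \<Rightarrow> 'w) \<Rightarrow> bool" where
  "is_cycle K \<pi> \<longleftrightarrow> is_path K \<pi> \<and> (\<forall>i. \<exists>j>i. \<pi> j = \<pi> 0)"

definition Cyc :: "('ap, 'w) kripke \<Rightarrow> 'w \<Rightarrow> (nat \<Rightarrow> 'w) set" where
  "Cyc K w = {\<pi>. is_cycle K \<pi> \<and> \<pi> 0 = w}"

datatype 'ap sform =
    Prop 'ap
  | SNot "'ap sform"
  | SAnd "'ap sform" "'ap sform"
  | SOr "'ap sform" "'ap sform"
  | SE "'ap pform"
  | SA "'ap pform"
  | SEc "'ap pform"
  | SAc "'ap pform"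
and 'ap pform =
    PState "'ap sform"
  | PNot "'ap pform"
  | PAnd "'ap pform" "'ap pform"
  | POr "'ap pform" "'ap pform"
  | PX "'ap pform"
  | PU "'ap pform" "'ap pform"

fun sat_s :: "('ap, 'w) kripke \<Rightarrow> 'w \<Rightarrow> 'ap sform \<Rightarrow> bool"
and sat_p :: "('ap, 'w) kripke \<Rightarrow> (nat \<Rightarrow> 'w) \<Rightarrow> nat \<Rightarrow> 'ap pform \<Rightarrow> bool" where
  "sat_s K w (Prop p) = (p \<in> kL K w)"
| "sat_s K w (SNot f) = (\<not> sat_s K w f)"
| "sat_s K w (SAnd f g) = (sat_s K w f \<and> sat_s K w g)"
| "sat_s K w (SOr f g) = (sat_s K w f \<or> sat_s K w g)"
| "sat_s K w (SE \<psi>) = (\<exists>\<pi>\<in>Pth K w. sat_p K \<pi> 0 \<psi>)"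
| "sat_s K w (SA \<psi>) = (\<forall>\<pi>\<in>Pth K w. sat_p K \<pi> 0 \<psi>)"
| "sat_s K w (SEc \<psi>) = (\<exists>\<pi>\<in>Cyc K w. sat_p K \<pi> 0 \<psi>)"
| "sat_s K w (SAc \<psi>) = (\<forall>\<pi>\<in>Cyc K w. sat_p K \<pi> 0 \<psi>)"
| "sat_p K \<pi> i (PState f) = sat_s K (\<pi> i) f"
| "sat_p K \<pi> i (PNot \<psi>) = (\<not> sat_p K \<pi> i \<psi>)"
| "sat_p K \<pi> i (PAnd \<psi> \<chi>) = (sat_p K \<pi> i \<psi> \<and> sat_p K \<pi> i \<chi>)"
| "sat_p K \<pi> i (POr \<psi> \<chi>) = (sat_p K \<pi> i \<psi> \<or> sat_p K \<pi> i \<chi>)"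
| "sat_p K \<pi> i (PX \<psi>) = sat_p K \<pi> (Suc i) \<psi>"
| "sat_p K \<pi> i (PU \<psi> \<chi>) =
     (\<exists>k. sat_p K \<pi> (i + k) \<chi> \<and> (\<forall>j<k. sat_p K \<pi> (i + j) \<psi>))"

definition models :: "('ap, 'w) kripke \<Rightarrow> 'ap sform \<Rightarrow> bool" where
  "models K \<phi> \<longleftrightarrow> sat_s K (kI K) \<phi>"

definition cycle_bisim ::
  "('ap, 'w1) kripke \<Rightarrow> ('ap, 'w2) kripke \<Rightarrow> ('w1 \<times> 'w2) set \<Rightarrow> bool" where
  "cycle_bisim K1 K2 B \<longleftrightarrow>
     B \<subseteq> kW K1 \<times> kW K2 \<and>
     (kI K1, kI K2) \<in> B \<and>
     (\<forall>(w1, w2)\<in>B.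
        kL K1 w1 = kL K2 w2 \<and>
        (\<forall>v1. (w1, v1) \<in> kR K1 \<longrightarrow> (\<exists>v2. (w2, v2) \<in> kR K2 \<and> (v1, v2) \<in> B)) \<and>
        (\<forall>v2. (w2, v2) \<in> kR K2 \<longrightarrow> (\<exists>v1. (w1, v1) \<in> kR K1 \<and> (v1, v2) \<in> B)) \<and>
        (\<forall>\<pi>1\<in>Cyc K1 w1. \<exists>\<pi>2\<in>Cyc K2 w2. \<forall>i. (\<pi>1 i, \<pi>2 i) \<in> B) \<and>
        (\<forall>\<pi>2\<in>Cyc K2 w2. \<exists>\<pi>1\<in>Cyc K1 w1. \<forall>i. (\<pi>1 i, \<pi>2 i) \<in> B))"

end

theory Submission
  imports Defs
begin

lemma path_lift:
  assumes "(p 0, b0) \<in> B" "\<forall>n. (p n, p (Suc n)) \<in> R1"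
    and fw: "\<forall>a b a'. (a,b)\<in>B \<longrightarrow> (a,a')\<in>R1 \<longrightarrow> (\<exists>b'. (b,b')\<in>R2 \<and> (a',b')\<in>B)"
  shows "\<exists>q. q 0 = b0 \<and> (\<forall>n. (q n, q (Suc n))\<in>R2) \<and> (\<forall>n. (p n, q n)\<in>B)"
proof -
  define q where "q = rec_nat b0 (\<lambda>n x. SOME v. (x, v) \<in> R2 \<and> (p (Suc n), v) \<in> B)"
  have q0: "q 0 = b0" and qS: "\<And>n. q (Suc n) = (SOME v. (q n, v) \<in> R2 \<and> (p (Suc n), v) \<in> B)"
    by (simp_all add: q_def)
  have B: "(p n, q n) \<in> B \<and> (q n, q (Suc n)) \<in> R2 \<and> (p (Suc n), q (Suc n)) \<in> B" for n
  proof (induction n)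
    case 0
    then obtain v where "(b0, v) \<in> R2 \<and> (p (Suc 0), v) \<in> B" using fw assms(1,2) by blast
    then show ?case using q0 qS[of 0] assms(1) by (metis (mono_tags, lifting) someI)
  next
    case (Suc n)
    then obtain v where "(q (Suc n), v) \<in> R2 \<and> (p (Suc (Suc n)), v) \<in> B" using fw assms(2) by blast
    then show ?case using Suc qS[of "Suc n"] by (metis (mono_tags, lifting) someI)
  qed
  show ?thesis using q0 B by blast
qed

lemma main_ind:
  assumes cb: "cycle_bisim K1 K2 B"
  shows "(\<forall>w1 w2. (w1, w2) \<in> B \<longrightarrow> (sat_s K1 w1 \<phi> \<longleftrightarrow> sat_s K2 w2 \<phi>))
     \<and> (\<forall>\<pi>1 \<pi>2. (\<forall>i. (\<pi>1 i, \<pi>2 i) \<in> B) \<longrightarrow> (\<forall>i. sat_p K1 \<pi>1 i \<psi> \<longleftrightarrow> sat_p K2 \<pi>2 i \<psi>))"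
proof -
  have lab: "\<And>w1 w2. (w1,w2)\<in>B \<Longrightarrow> kL K1 w1 = kL K2 w2" using cb unfolding cycle_bisim_def by blast
  have f1: "\<forall>a b a'. (a,b)\<in>B \<longrightarrow> (a,a')\<in>kR K1 \<longrightarrow> (\<exists>b'. (b,b')\<in>kR K2 \<and> (a',b')\<in>B)"
    using cb unfolding cycle_bisim_def by blast
  have f2: "\<forall>a b a'. (a,b)\<in>B\<inverse> \<longrightarrow> (a,a')\<in>kR K2 \<longrightarrow> (\<exists>b'. (b,b')\<in>kR K1 \<and> (a',b')\<in>B\<inverse>)"
    using cb unfolding cycle_bisim_def by blast
  have p1: "\<exists>\<pi>2\<in>Pth K2 w2. \<forall>i. (\<pi>1 i, \<pi>2 i) \<in> B" if "(w1,w2)\<in>B" "\<pi>1 \<in> Pth K1 w1" for w1 w2 \<pi>1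
  proof -
    from that have "(\<pi>1 0, w2) \<in> B" "\<forall>n. (\<pi>1 n, \<pi>1 (Suc n)) \<in> kR K1"
      unfolding Pth_def is_path_def by auto
    from path_lift[OF this f1] show ?thesis unfolding Pth_def is_path_def by auto
  qed
  have p2: "\<exists>\<pi>1\<in>Pth K1 w1. \<forall>i. (\<pi>1 i, \<pi>2 i) \<in> B" if "(w1,w2)\<in>B" "\<pi>2 \<in> Pth K2 w2" for w1 w2 \<pi>2
  proof -
    from that have "(\<pi>2 0, w1) \<in> B\<inverse>" "\<forall>n. (\<pi>2 n, \<pi>2 (Suc n)) \<in> kR K2"
      unfolding Pth_def is_path_def by auto
    from path_lift[OF this f2] show ?thesis unfolding Pth_def is_path_def by auto
  qed
  have c1: "\<And>w1 w2 \<pi>1. (w1,w2)\<in>B \<Longrightarrow> \<pi>1\<in>Cyc K1 w1 \<Longrightarrow> \<exists>\<pi>2\<in>Cyc K2 w2. \<forall>i. (\<pi>1 i, \<pi>2 i) \<in> B"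
    using cb unfolding cycle_bisim_def by blast
  have c2: "\<And>w1 w2 \<pi>2. (w1,w2)\<in>B \<Longrightarrow> \<pi>2\<in>Cyc K2 w2 \<Longrightarrow> \<exists>\<pi>1\<in>Cyc K1 w1. \<forall>i. (\<pi>1 i, \<pi>2 i) \<in> B"
    using cb unfolding cycle_bisim_def by blast
  have "(\<forall>w1 w2. (w1, w2) \<in> B \<longrightarrow> (sat_s K1 w1 \<phi> \<longleftrightarrow> sat_s K2 w2 \<phi>))"
    and "(\<forall>\<pi>1 \<pi>2. (\<forall>i. (\<pi>1 i, \<pi>2 i) \<in> B) \<longrightarrow> (\<forall>i. sat_p K1 \<pi>1 i \<psi> \<longleftrightarrow> sat_p K2 \<pi>2 i \<psi>))"
  proof (induction \<phi> and \<psi>)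
    case (Prop x) then show ?case using lab by simp
  next
    case (SE x)
    then show ?case apply simp by (metis p1 p2)
  next
    case (SA x)
    then show ?case apply simp by (metis p1 p2)
  next
    case (SEc x)
    then show ?case apply simp by (metis c1 c2)
  next
    case (SAc x)
    then show ?case apply simp by (metis c1 c2)
  next
    case (PU x1 x2)
    then show ?case by simp
  qed auto
  then show ?thesis by blast
qed

theorem mainTheorem2:
  fixes K1 :: "('ap, 'w1) kripke" and K2 :: "('ap, 'w2) kripke"
    and B :: "('w1 \<times> 'w2) set"
  assumes "kripke_wf K1" and "kripke_wf K2" and "kAP K1 = kAP K2"
    and "cycle_bisim K1 K2 B"
  shows "(\<forall>\<phi> w1 w2. (w1, w2) \<in> B \<longrightarrow> (sat_s K1 w1 \<phi> \<longleftrightarrow> sat_s K2 w2 \<phi>))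
         \<and> (\<forall>\<phi>. models K1 \<phi> \<longleftrightarrow> models K2 \<phi>)"
proof -
  have A: "\<forall>\<phi> w1 w2. (w1, w2) \<in> B \<longrightarrow> (sat_s K1 w1 \<phi> \<longleftrightarrow> sat_s K2 w2 \<phi>)"
    using main_ind[OF assms(4)] by blast
  have "(kI K1, kI K2) \<in> B" using assms(4) unfolding cycle_bisim_def by blast
  with A show ?thesis unfolding models_def by blast
qed

end
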